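(* Let $A$ be a synaptic algebra and $p,q\in P$. With $r_p:=p\wedge(p^{\perp}\vee q)\wedge(p^{\perp}\vee q^{\perp})$, $r_{p^{\perp}}:=p^{\perp}\wedge(p\vee q)\wedge(p\vee q^{\perp})$, $r_q:=q\wedge(p\vee q^{\perp})\wedge(p^{\perp}\vee q^{\perp})$, $r_{q^{\perp}}:=q^{\perp}\wedge(p\vee q)\wedge(p^{\perp}\vee q)$ and $[p,q]:=(p\vee q)\wedge(p\vee q^{\perp})\wedge(p^{\perp}\vee q)\wedge(p^{\perp}\vee q^{\perp})$: (i) $r_p\perp r_{p^{\perp}}$ and $r_q\perp r_{q^{\perp}}$; (ii) $1=(p\wedge q)\oplus(p\wedge q^{\perp})\oplus(p^{\perp}\wedge q)\oplus(p^{\perp}\wedge q^{\perp})\oplus r_p\oplus r_{p^{\perp}}=[p,q]^{\perp}\oplus r_p\oplus r_{p^{\perp}}$; (iii) $1=(p\wedge q)\oplus(p\wedge q^{\perp})\oplus(p^{\perp}\wedge q)\oplus(p^{\perp}\wedge q^{\perp})\oplus r_q\oplus r_{q^{\perp}}=[p,q]^{\perp}\oplus r_q\oplus r_{q^{\perp}}$; (iv) $r_p\oplus r_{p^{\perp}}=r_q\oplus r_{q^{\perp}}=[p,q]$.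
   Context: Synaptic algebra (Foulis): $R$ is a real linear associative algebra with unit $1$, and $A\subseteq R$ is a real linear subspace with $1\in A$. For $a,b\in A$ write $aCb$ iff $ab=ba$; $C(a):=\{b\in A: aCb\}$; $CC(a):=\{b\in A: bCd \text{ for all } d\in C(a)\}$. $A$ is a synaptic algebra with enveloping algebra $R$ iff: (SA1) $A$ is a partially ordered archimedean real linear space with positive cone $A^+$, $1$ is an order unit, $\|\cdot\|$ the order-unit norm; (SA2) $a\in A\Rightarrow a^2\in A^+$; (SA3) $a,b\in A^+\Rightarrow aba\in A^+$; (SA4) if $a\in A$, $b\in A^+$, $aba=0$ then $ab=ba=0$; (SA5) if $a\in A^+$ there is $b\in A^+\cap CC(a)$ with $b^2=a$; (SA6) for $a\in A$ there is $p=p^2\in A$ with $ab=0\Leftrightarrow pb=0$ for all $b\in A$; (SA7) if $1\le a$ there is $b\in A$ with $ab=ba=1$; (SA8) if $a,b\in A$, $a_1\le a_2\le\cdots$ are pairwise commuting elements of $C(b)$ with $\|a-a_n\|\to0$, then $a\in C(b)$. $A$ is nondegenerate. $P:=\{p\in A:p=p^2\}$ with the order inherited from $A$ is an orthomodular lattice with orthocomplement $p^{\perp}:=1-p$, meet $\wedge$, join $\vee$. $p\perp q$ means $p\le q^{\perp}$; for pairwise orthogonal projections the orthosum $\oplus$ is their sum. *)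

theory Defs
  imports Complex_Main
begin

text \<open>A synaptic algebra is represented by a set A of elements of the enveloping
  real unital associative algebra 'r, together with its positive cone Pos.\<close>

definition sa_le :: "'r::real_algebra_1 set \<Rightarrow> 'r \<Rightarrow> 'r \<Rightarrow> bool" where
  "sa_le Pos a b \<longleftrightarrow> b - a \<in> Pos"

definition sa_comm :: "'r::real_algebra_1 set \<Rightarrow> 'r \<Rightarrow> 'r set" where
  "sa_comm A a = {b \<in> A. a * b = b * a}"

definition sa_bicomm :: "'r::real_algebra_1 set \<Rightarrow> 'r \<Rightarrow> 'r set" where
  "sa_bicomm A a = {b \<in> A. \<forall>d \<in> sa_comm A a. b * d = d * b}"

definition sa_norm :: "'r::real_algebra_1 set \<Rightarrow> 'r \<Rightarrow> real" where
  "sa_norm Pos a = Inf {l::real. 0 < l \<and> sa_le Pos (- (l *\<^sub>R 1)) a \<and> sa_le Pos a (l *\<^sub>R 1)}"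

definition synaptic_algebra :: "'r::real_algebra_1 set \<Rightarrow> 'r set \<Rightarrow> bool" where
  "synaptic_algebra A Pos \<longleftrightarrow>
    \<comment> \<open>A is a real linear subspace containing 1\<close>
    0 \<in> A \<and> 1 \<in> A \<and> (\<forall>a\<in>A. \<forall>b\<in>A. a + b \<in> A) \<and> (\<forall>c::real. \<forall>a\<in>A. c *\<^sub>R a \<in> A) \<and>
    \<comment> \<open>(SA1) partially ordered (positive cone), archimedean, 1 an order unit\<close>
    Pos \<subseteq> A \<and> (\<forall>a\<in>Pos. \<forall>b\<in>Pos. a + b \<in> Pos) \<and> (\<forall>c::real. \<forall>a\<in>Pos. 0 \<le> c \<longrightarrow> c *\<^sub>R a \<in> Pos) \<and>
    (\<forall>a. a \<in> Pos \<and> - a \<in> Pos \<longrightarrow> a = 0) \<and>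
    (\<forall>a\<in>A. \<forall>b\<in>A. (\<forall>n::nat. sa_le Pos (of_nat n *\<^sub>R a) b) \<longrightarrow> sa_le Pos a 0) \<and>
    (\<forall>a\<in>A. \<exists>n::nat. sa_le Pos a (of_nat n *\<^sub>R 1)) \<and>
    \<comment> \<open>(SA2)\<close>
    (\<forall>a\<in>A. a * a \<in> Pos) \<and>
    \<comment> \<open>(SA3)\<close>
    (\<forall>a\<in>Pos. \<forall>b\<in>Pos. a * b * a \<in> Pos) \<and>
    \<comment> \<open>(SA4)\<close>
    (\<forall>a\<in>A. \<forall>b\<in>Pos. a * b * a = 0 \<longrightarrow> a * b = 0 \<and> b * a = 0) \<and>
    \<comment> \<open>(SA5)\<close>
    (\<forall>a\<in>Pos. \<exists>b\<in>Pos \<inter> sa_bicomm A a. b * b = a) \<and>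
    \<comment> \<open>(SA6)\<close>
    (\<forall>a\<in>A. \<exists>p\<in>A. p * p = p \<and> (\<forall>b\<in>A. a * b = 0 \<longleftrightarrow> p * b = 0)) \<and>
    \<comment> \<open>(SA7)\<close>
    (\<forall>a\<in>A. sa_le Pos 1 a \<longrightarrow> (\<exists>b\<in>A. a * b = 1 \<and> b * a = 1)) \<and>
    \<comment> \<open>(SA8)\<close>
    (\<forall>a\<in>A. \<forall>b\<in>A. \<forall>s::nat \<Rightarrow> 'r.
        (\<forall>n. s n \<in> sa_comm A b) \<and> (\<forall>m n. s m * s n = s n * s m) \<and>
        (\<forall>n. sa_le Pos (s n) (s (Suc n))) \<and>
        (\<lambda>n. sa_norm Pos (a - s n)) \<longlonglongrightarrow> 0
        \<longrightarrow> a \<in> sa_comm A b)"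

definition sa_proj :: "'r::real_algebra_1 set \<Rightarrow> 'r set" where
  "sa_proj A = {p \<in> A. p * p = p}"

definition sa_perp :: "'r::real_algebra_1 \<Rightarrow> 'r" where
  "sa_perp p = 1 - p"

definition sa_meet :: "'r::real_algebra_1 set \<Rightarrow> 'r set \<Rightarrow> 'r \<Rightarrow> 'r \<Rightarrow> 'r" where
  "sa_meet A Pos p q = (THE r. r \<in> sa_proj A \<and> sa_le Pos r p \<and> sa_le Pos r q \<and>
      (\<forall>s\<in>sa_proj A. sa_le Pos s p \<and> sa_le Pos s q \<longrightarrow> sa_le Pos s r))"

definition sa_join :: "'r::real_algebra_1 set \<Rightarrow> 'r set \<Rightarrow> 'r \<Rightarrow> 'r \<Rightarrow> 'r" where
  "sa_join A Pos p q = (THE r. r \<in> sa_proj A \<and> sa_le Pos p r \<and> sa_le Pos q r \<and>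
      (\<forall>s\<in>sa_proj A. sa_le Pos p s \<and> sa_le Pos q s \<longrightarrow> sa_le Pos r s))"

definition sa_orth :: "'r::real_algebra_1 set \<Rightarrow> 'r \<Rightarrow> 'r \<Rightarrow> bool" where
  "sa_orth Pos p q \<longleftrightarrow> sa_le Pos p (sa_perp q)"

definition sa_orthosum :: "'r::real_algebra_1 set \<Rightarrow> 'r list \<Rightarrow> 'r \<Rightarrow> bool" where
  "sa_orthosum Pos xs x \<longleftrightarrow>
     (\<forall>i<length xs. \<forall>j<length xs. i \<noteq> j \<longrightarrow> sa_orth Pos (xs ! i) (xs ! j)) \<and> sum_list xs = x"

end

theory Submission
  imports Defs
begin

locale synalg =
  fixes A Pos :: "'r::real_algebra_1 set"
  assumes SA: "synaptic_algebra A Pos"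
begin

lemma SAc: "0 \<in> A \<and> 1 \<in> A \<and> (\<forall>a\<in>A. \<forall>b\<in>A. a + b \<in> A) \<and> (\<forall>c::real. \<forall>a\<in>A. c *\<^sub>R a \<in> A) \<and>
    Pos \<subseteq> A \<and> (\<forall>a\<in>Pos. \<forall>b\<in>Pos. a + b \<in> Pos) \<and>
    (\<forall>a. a \<in> Pos \<and> - a \<in> Pos \<longrightarrow> a = 0) \<and>
    (\<forall>a\<in>A. a * a \<in> Pos) \<and>
    (\<forall>a\<in>Pos. \<forall>b\<in>Pos. a * b * a \<in> Pos) \<and>
    (\<forall>a\<in>A. \<forall>b\<in>Pos. a * b * a = 0 \<longrightarrow> a * b = 0 \<and> b * a = 0) \<and>
    (\<forall>a\<in>A. \<exists>p\<in>A. p * p = p \<and> (\<forall>b\<in>A. a * b = 0 \<longleftrightarrow> p * b = 0))"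
  using SA unfolding synaptic_algebra_def by (intro conjI) (elim conjE; assumption)+

lemma A0: "0 \<in> A" using SAc by simp
lemma A1: "1 \<in> A" using SAc by simp
lemma Aadd: "a \<in> A \<Longrightarrow> b \<in> A \<Longrightarrow> a + b \<in> A" using SAc by simp
lemma Ascale: "a \<in> A \<Longrightarrow> c *\<^sub>R a \<in> A" using SAc by simp
lemma PosA: "Pos \<subseteq> A" using SAc by simp
lemma Posadd: "a \<in> Pos \<Longrightarrow> b \<in> Pos \<Longrightarrow> a + b \<in> Pos" using SAc by simp
lemma Posanti: "a \<in> Pos \<Longrightarrow> - a \<in> Pos \<Longrightarrow> a = 0" using SAc by simp
lemma SA2: "a \<in> A \<Longrightarrow> a * a \<in> Pos" using SAc by simp
lemma SA3: "a \<in> Pos \<Longrightarrow> b \<in> Pos \<Longrightarrow> a * b * a \<in> Pos" using SAc by simp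
lemma SA4: "a \<in> A \<Longrightarrow> b \<in> Pos \<Longrightarrow> a * b * a = 0 \<Longrightarrow> a * b = 0 \<and> b * a = 0" using SAc by simp
lemma SA6: "a \<in> A \<Longrightarrow> \<exists>p\<in>A. p * p = p \<and> (\<forall>b\<in>A. a * b = 0 \<longleftrightarrow> p * b = 0)" using SAc by simp

lemma Aneg: "a \<in> A \<Longrightarrow> - a \<in> A"
  using Ascale[of a "-1"] by simp

lemma Adiff: "a \<in> A \<Longrightarrow> b \<in> A \<Longrightarrow> a - b \<in> A"
  using Aadd[OF _ Aneg] by (simp only: diff_conv_add_uminus)

lemma PosA': "a \<in> Pos \<Longrightarrow> a \<in> A" using PosA by blast

abbreviation "P \<equiv> sa_proj A"
abbreviation "le \<equiv> sa_le Pos"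

lemma P_iff: "p \<in> P \<longleftrightarrow> p \<in> A \<and> p * p = p" by (simp add: sa_proj_def)

lemma P_Pos: "p \<in> P \<Longrightarrow> p \<in> Pos" using SA2 by (force simp: P_iff)

lemma P_perp: "p \<in> P \<Longrightarrow> 1 - p \<in> P"
  by (auto simp: P_iff Adiff A1 algebra_simps)

lemma P1: "1 \<in> P" by (simp add: P_iff A1)

lemma le_trans: "le a b \<Longrightarrow> le b c \<Longrightarrow> le a c"
  unfolding sa_le_def using Posadd by fastforce

lemma le_perp: "le (1 - b) (1 - a) \<longleftrightarrow> le a b"
  unfolding sa_le_def by simp

lemma le_antisym: "le a b \<Longrightarrow> le b a \<Longrightarrow> a = b"
  unfolding sa_le_def using Posanti[of "b - a"] by simp

lemma leI: assumes "p \<in> P" "q \<in> P" "p * q = p" shows "le p q"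
proof -
  have pA: "p \<in> A" and qA: "q \<in> A" and pp: "p*p = p" and qq: "q*q=q" using assms by (auto simp: P_iff)
  have "(1 - q) * p * (1 - q) = 0" using assms(3) by (simp add: algebra_simps)
  then have "(1 - q) * p = 0" using SA4[of "1-q" p] P_Pos[OF assms(1)] Adiff[OF A1 qA] by blast
  then have qp: "q * p = p" by (simp add: algebra_simps)
  have "(q - p) * (q - p) = q - p" using pp qq qp assms(3) by (simp add: algebra_simps)
  moreover have "(q - p) * (q - p) \<in> Pos" using SA2 Adiff[OF qA pA] by blast
  ultimately show ?thesis by (simp add: sa_le_def)
qed

lemma leI': assumes "p \<in> P" "q \<in> P" "q * p = p" shows "le p q"
proof -
  have qA: "q \<in> A" using assms by (auto simp: P_iff)
  have "(1 - q) * p * (1 - q) = 0" using assms(3) by (simp add: algebra_simps)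
  then have "p * (1 - q) = 0" using SA4[of "1-q" p] P_Pos[OF assms(1)] Adiff[OF A1 qA] by blast
  then have "p * q = p" by (simp add: algebra_simps)
  then show ?thesis using leI assms by blast
qed

lemma leD: assumes "p \<in> P" "q \<in> P" "le p q" shows "p * q = p \<and> q * p = p"
proof -
  have pA: "p \<in> A" and qA: "q \<in> A" and pp: "p*p = p" and qq: "q*q=q" using assms by (auto simp: P_iff)
  have qpP: "q - p \<in> Pos" using assms(3) by (simp add: sa_le_def)
  have q1: "1 - q \<in> Pos" using P_Pos P_perp assms(2) by blast
  have "(1 - q) * (q - p) * (1 - q) \<in> Pos" using SA3[OF q1 qpP] .
  moreover have "(1 - q) * (q - p) * (1 - q) = - ((1 - q) * p * (1 - q))"
    using qq by (simp add: algebra_simps)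
  ultimately have "- ((1 - q) * p * (1 - q)) \<in> Pos" by simp
  moreover have "(1 - q) * p * (1 - q) \<in> Pos" using SA3[OF q1 P_Pos[OF assms(1)]] .
  ultimately have "(1 - q) * p * (1 - q) = 0" using Posanti by blast
  then have "(1 - q) * p = 0 \<and> p * (1 - q) = 0" using SA4 P_Pos[OF assms(1)] Adiff[OF A1 qA] by blast
  then show ?thesis by (simp add: algebra_simps)
qed

lemma le_iff: "p \<in> P \<Longrightarrow> q \<in> P \<Longrightarrow> le p q \<longleftrightarrow> p * q = p"
  using leI leD by blast

lemma le_iff': "p \<in> P \<Longrightarrow> q \<in> P \<Longrightarrow> le p q \<longleftrightarrow> q * p = p"
  using leI' leD by blast

lemma orth_comm: assumes "x \<in> P" "y \<in> P" "x * y = 0" shows "y * x = 0"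
proof -
  have "x * (1 - y) = x" using assms(3) by (simp add: algebra_simps)
  then have "(1 - y) * x = x" using le_iff le_iff' assms P_perp by metis
  then show ?thesis by (simp add: algebra_simps)
qed

lemma orthI: assumes "x \<in> P" "y \<in> P" "x * y = 0" shows "sa_orth Pos x y"
proof -
  have "x * (1 - y) = x" using assms(3) by (simp add: algebra_simps)
  then show ?thesis unfolding sa_orth_def sa_perp_def using leI assms P_perp by blast
qed

lemma refl_le: "p \<in> P \<Longrightarrow> le p p" using leI by (simp add: P_iff)

lemma PA: "p \<in> P \<Longrightarrow> p \<in> A" by (simp add: P_iff)
lemma Pidem: "p \<in> P \<Longrightarrow> p * p = p" by (simp add: P_iff)

lemma join_eq:
  assumes r: "r \<in> P" "le x r" "le y r" "\<forall>s\<in>P. le x s \<and> le y s \<longrightarrow> le r s"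
  shows "sa_join A Pos x y = r"
  unfolding sa_join_def
proof (rule the_equality)
  show "r \<in> P \<and> le x r \<and> le y r \<and> (\<forall>s\<in>P. le x s \<and> le y s \<longrightarrow> le r s)" using r by blast
next
  fix r' assume "r' \<in> P \<and> le x r' \<and> le y r' \<and> (\<forall>s\<in>P. le x s \<and> le y s \<longrightarrow> le r' s)"
  then show "r' = r" using r le_antisym by blast
qed

lemma meet_eq:
  assumes r: "r \<in> P" "le r x" "le r y" "\<forall>s\<in>P. le s x \<and> le s y \<longrightarrow> le s r"
  shows "sa_meet A Pos x y = r"
  unfolding sa_meet_def
proof (rule the_equality)
  show "r \<in> P \<and> le r x \<and> le r y \<and> (\<forall>s\<in>P. le s x \<and> le s y \<longrightarrow> le s r)" using r by blast
next
  fix r' assume "r' \<in> P \<and> le r' x \<and> le r' y \<and> (\<forall>s\<in>P. le s x \<and> le s y \<longrightarrow> le s r')"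
  then show "r' = r" using r le_antisym by blast
qed

lemma carrier_lub:
  assumes x: "x \<in> P" and y: "y \<in> P" and e: "e \<in> P" and ec: "\<forall>b\<in>A. (x + y) * b = 0 \<longleftrightarrow> e * b = 0"
  shows "le x e \<and> le y e \<and> (\<forall>s\<in>P. le x s \<and> le y s \<longrightarrow> le e s)"
proof (intro conjI)
  have eA: "e \<in> A" using e PA by blast
  have ne: "1 - e \<in> A" using Adiff[OF A1 eA] .
  have "e * (1 - e) = 0" using Pidem[OF e] by (simp add: algebra_simps)
  then have "(x + y) * (1 - e) = 0" using ec ne by blast
  then have "(1 - e) * x * (1 - e) + (1 - e) * y * (1 - e) = 0"
    by (metis distrib_left distrib_right mult.assoc mult_zero_right)
  moreover have "(1 - e) * x * (1 - e) \<in> Pos" "(1 - e) * y * (1 - e) \<in> Pos"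
    using SA3 P_Pos P_perp e x y by blast+
  ultimately have "(1 - e) * x * (1 - e) = 0 \<and> (1 - e) * y * (1 - e) = 0"
    using Posanti by (metis add.inverse_unique minus_equation_iff)
  then have "(1 - e) * x = 0 \<and> (1 - e) * y = 0" using SA4 ne P_Pos x y by blast
  then have "e * x = x" "e * y = y" by (simp_all add: algebra_simps)
  then show "le x e" "le y e" using le_iff' x y e by blast+
  show "\<forall>s\<in>P. le x s \<and> le y s \<longrightarrow> le e s"
  proof (intro ballI impI)
    fix s assume s: "s \<in> P" and "le x s \<and> le y s"
    then have "x * s = x" "y * s = y" using le_iff x y by blast+
    then have "(x + y) * (1 - s) = 0" by (simp add: algebra_simps)
    then have "e * (1 - s) = 0" using ec Adiff[OF A1 PA[OF s]] by blast
    then have "e * s = e" by (simp add: algebra_simps)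
    then show "le e s" using le_iff e s by blast
  qed
qed

lemma carrier_ex: assumes "a \<in> A" obtains e where "e \<in> P" "\<forall>b\<in>A. a * b = 0 \<longleftrightarrow> e * b = 0"
  using SA6[OF assms] P_iff by blast

lemma carrier_join:
  assumes x: "x \<in> P" and y: "y \<in> P" and e: "e \<in> P" and ec: "\<forall>b\<in>A. (x + y) * b = 0 \<longleftrightarrow> e * b = 0"
  shows "sa_join A Pos x y = e"
  using join_eq carrier_lub[OF assms] e by blast

lemma join_props:
  assumes x: "x \<in> P" and y: "y \<in> P"
  shows "sa_join A Pos x y \<in> P" "le x (sa_join A Pos x y)" "le y (sa_join A Pos x y)"
    "\<And>s. s \<in> P \<Longrightarrow> le x s \<Longrightarrow> le y s \<Longrightarrow> le (sa_join A Pos x y) s"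
proof -
  obtain e where e: "e \<in> P" "\<forall>b\<in>A. (x + y) * b = 0 \<longleftrightarrow> e * b = 0"
    using carrier_ex Aadd PA x y by metis
  have j: "sa_join A Pos x y = e" using carrier_join x y e by blast
  show "sa_join A Pos x y \<in> P" "le x (sa_join A Pos x y)" "le y (sa_join A Pos x y)"
    "\<And>s. s \<in> P \<Longrightarrow> le x s \<Longrightarrow> le y s \<Longrightarrow> le (sa_join A Pos x y) s"
    using carrier_lub[OF x y e] j e by auto
qed

lemma meet_join: assumes x: "x \<in> P" and y: "y \<in> P"
  shows "sa_meet A Pos x y = 1 - sa_join A Pos (1 - x) (1 - y)"
proof (rule meet_eq)
  let ?j = "sa_join A Pos (1 - x) (1 - y)"
  note J = join_props[OF P_perp[OF x] P_perp[OF y]]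
  show "1 - ?j \<in> P" using J(1) P_perp by blast
  show "le (1 - ?j) x" using J(2) le_perp[of x "1 - ?j"] by simp
  show "le (1 - ?j) y" using J(3) le_perp[of y "1 - ?j"] by simp
  show "\<forall>s\<in>P. le s x \<and> le s y \<longrightarrow> le s (1 - ?j)"
  proof (intro ballI impI)
    fix s assume s: "s \<in> P" "le s x \<and> le s y"
    then have "le (1 - x) (1 - s)" "le (1 - y) (1 - s)" using le_perp by blast+
    then have "le ?j (1 - s)" using J(4) P_perp[OF s(1)] by blast
    then show "le s (1 - ?j)" using le_perp[of "1 - ?j" s] by simp
  qed
qed

lemma meet_props:
  assumes x: "x \<in> P" and y: "y \<in> P"
  shows "sa_meet A Pos x y \<in> P" "le (sa_meet A Pos x y) x" "le (sa_meet A Pos x y) y"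
    "\<And>s. s \<in> P \<Longrightarrow> le s x \<Longrightarrow> le s y \<Longrightarrow> le s (sa_meet A Pos x y)"
proof -
  let ?j = "sa_join A Pos (1 - x) (1 - y)"
  note J = join_props[OF P_perp[OF x] P_perp[OF y]]
  note M = meet_join[OF x y]
  show "sa_meet A Pos x y \<in> P" using J(1) P_perp M by simp
  show "le (sa_meet A Pos x y) x" using J(2) le_perp[of x "1 - ?j"] M by simp
  show "le (sa_meet A Pos x y) y" using J(3) le_perp[of y "1 - ?j"] M by simp
  fix s assume s: "s \<in> P" "le s x" "le s y"
  then have "le (1 - x) (1 - s)" "le (1 - y) (1 - s)" using le_perp by blast+
  then have "le ?j (1 - s)" using J(4) P_perp[OF s(1)] by blast
  then show "le s (sa_meet A Pos x y)" using le_perp[of "1 - ?j" s] M by simp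
qed

lemma comm_carrier:
  assumes p: "p \<in> P" and a: "a \<in> A" and pa: "p * a = a * p" and e: "e \<in> P"
    and ec: "\<forall>b\<in>A. a * b = 0 \<longleftrightarrow> e * b = 0"
  shows "p * e = e * p"
proof -
  have ee: "e * e = e" and pp: "p * p = p" using e p Pidem by blast+
  have eel: "e * (e * z) = e * z" for z using ee by (metis mult.assoc)
  have "e * (1 - e) = 0" using ee by (simp add: algebra_simps)
  then have ae: "a * (1 - e) = 0" using ec Adiff[OF A1 PA[OF e]] by blast
  have pa': "(1 - p) * a = a * (1 - p)" using pa by (simp add: algebra_simps)
  define b1 where "b1 = p * (1 - e) * p"
  define b2 where "b2 = (1 - p) * (1 - e) * (1 - p)"
  have b1P: "b1 \<in> Pos" unfolding b1_def using SA3 P_Pos P_perp p e by blast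
  have b2P: "b2 \<in> Pos" unfolding b2_def using SA3 P_Pos P_perp p e by blast
  have "a * b1 = p * (a * (1 - e)) * p" unfolding b1_def using pa by (metis mult.assoc)
  then have "a * b1 = 0" using ae by simp
  then have eb1: "e * b1 = 0" using ec b1P PosA by blast
  then have "e * b1 * e = 0" by simp
  then have b1e: "b1 * e = 0" using SA4 PA[OF e] b1P by blast
  have "a * b2 = (1 - p) * (a * (1 - e)) * (1 - p)" unfolding b2_def using pa' by (metis mult.assoc)
  then have "a * b2 = 0" using ae by simp
  then have eb2: "e * b2 = 0" using ec b2P PosA by blast
  then have "e * b2 * e = 0" by simp
  then have b2e: "b2 * e = 0" using SA4 PA[OF e] b2P by blast
  define u where "u = e * p * (1 - e)"
  have "e * b1 = u * p" unfolding b1_def u_def by (simp add: mult.assoc)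
  then have up: "u * p = 0" using eb1 by simp
  have "e * b2 = - (u * (1 - p))" unfolding b2_def u_def using ee eel by (simp add: algebra_simps)
  then have "u * (1 - p) = 0" using eb2 by simp
  then have "u = 0" using up by (simp add: algebra_simps)
  then have l: "e * p = e * p * e" unfolding u_def by (simp add: right_diff_distrib)
  define v where "v = (1 - e) * p * e"
  have "b1 * e = p * v" unfolding b1_def v_def by (simp add: mult.assoc)
  then have pv: "p * v = 0" using b1e by simp
  have "b2 * e = - ((1 - p) * v)" unfolding b2_def v_def using ee eel by (simp add: algebra_simps)
  then have "(1 - p) * v = 0" using b2e by simp
  then have "v = 0" using pv by (simp add: algebra_simps)
  then have r: "p * e = e * p * e" unfolding v_def by (simp add: left_diff_distrib right_diff_distrib)
  show ?thesis using l r by simp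
qed

lemma comm_join:
  assumes p: "p \<in> P" and x: "x \<in> P" and y: "y \<in> P" and px: "p * x = x * p" and py: "p * y = y * p"
  shows "p * sa_join A Pos x y = sa_join A Pos x y * p"
proof -
  obtain e where e: "e \<in> P" "\<forall>b\<in>A. (x + y) * b = 0 \<longleftrightarrow> e * b = 0"
    using carrier_ex Aadd PA x y by metis
  have j: "sa_join A Pos x y = e" using carrier_join x y e by blast
  have "p * (x + y) = (x + y) * p" using px py by (simp add: algebra_simps)
  then show ?thesis using comm_carrier[OF p Aadd[OF PA[OF x] PA[OF y]] _ e] j by simp
qed

lemma comm_meet:
  assumes p: "p \<in> P" and x: "x \<in> P" and y: "y \<in> P" and px: "p * x = x * p" and py: "p * y = y * p"
  shows "p * sa_meet A Pos x y = sa_meet A Pos x y * p"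
proof -
  have "p * (1 - x) = (1 - x) * p" "p * (1 - y) = (1 - y) * p" using px py by (simp_all add: algebra_simps)
  then have "p * sa_join A Pos (1 - x) (1 - y) = sa_join A Pos (1 - x) (1 - y) * p"
    using comm_join P_perp p x y by blast
  then show ?thesis unfolding meet_join[OF x y] by (simp add: right_diff_distrib left_diff_distrib)
qed

lemma comm_le: "p \<in> P \<Longrightarrow> x \<in> P \<Longrightarrow> le p x \<Longrightarrow> p * x = x * p"
  using leD by simp

lemma comm_le_perp: assumes "p \<in> P" "x \<in> P" "le (1 - p) x" shows "p * x = x * p"
proof -
  have "(1 - p) * x = x * (1 - p)" using leD assms P_perp by simp
  then show ?thesis by (simp add: algebra_simps)
qed

lemma orth_join: assumes x: "x \<in> P" and y: "y \<in> P" and xy: "x * y = 0"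
  shows "sa_join A Pos x y = x + y"
proof (rule join_eq)
  have yx: "y * x = 0" using orth_comm assms by blast
  have xx: "x * x = x" and yy: "y * y = y" using x y Pidem by blast+
  show xyP: "x + y \<in> P" using xx yy xy yx Aadd PA x y by (simp add: P_iff algebra_simps)
  show "le x (x + y)" using le_iff[OF x xyP] xx xy by (simp add: algebra_simps)
  show "le y (x + y)" using le_iff[OF y xyP] yy yx by (simp add: algebra_simps)
  show "\<forall>s\<in>P. le x s \<and> le y s \<longrightarrow> le (x + y) s"
  proof (intro ballI impI)
    fix s assume s: "s \<in> P" "le x s \<and> le y s"
    then have "x * s = x" "y * s = y" using le_iff x y by blast+
    then show "le (x + y) s" using le_iff[OF xyP s(1)] by (simp add: algebra_simps)
  qed
qed

lemma orth_via: assumes "x \<in> P" "y \<in> P" "z \<in> P" "le x y" "le z (1 - y)" shows "x * z = 0"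
proof -
  have "x = x * y" "z = (1 - y) * z" using leD assms P_perp by auto
  then have "x * z = x * (y * (1 - y)) * z" by (metis mult.assoc)
  also have "y * (1 - y) = 0" using Pidem[OF assms(2)] by (simp add: algebra_simps)
  finally show ?thesis by simp
qed


lemma comm_zero: "x \<in> P \<Longrightarrow> y \<in> P \<Longrightarrow> x * y = 0 \<Longrightarrow> sa_orth Pos x y \<and> sa_orth Pos y x"
  using orthI orth_comm by blast

lemma orthosum6:
  assumes P: "a \<in> P" "b \<in> P" "c \<in> P" "d \<in> P" "e \<in> P" "f \<in> P"
    and z: "a*b = 0" "a*c = 0" "a*d = 0" "a*e = 0" "a*f = 0"
      "b*c = 0" "b*d = 0" "b*e = 0" "b*f = 0" "c*d = 0" "c*e = 0" "c*f = 0"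
      "d*e = 0" "d*f = 0" "e*f = 0"
    and s: "a + b + c + d + e + f = x"
  shows "sa_orthosum Pos [a,b,c,d,e,f] x"
proof -
  note O = comm_zero[OF P(1) P(2) z(1)] comm_zero[OF P(1) P(3) z(2)] comm_zero[OF P(1) P(4) z(3)]
    comm_zero[OF P(1) P(5) z(4)] comm_zero[OF P(1) P(6) z(5)]
    comm_zero[OF P(2) P(3) z(6)] comm_zero[OF P(2) P(4) z(7)] comm_zero[OF P(2) P(5) z(8)]
    comm_zero[OF P(2) P(6) z(9)] comm_zero[OF P(3) P(4) z(10)] comm_zero[OF P(3) P(5) z(11)]
    comm_zero[OF P(3) P(6) z(12)] comm_zero[OF P(4) P(5) z(13)] comm_zero[OF P(4) P(6) z(14)]
    comm_zero[OF P(5) P(6) z(15)]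
  show ?thesis unfolding sa_orthosum_def
    using O s by (simp add: less_Suc_eq numeral_eq_Suc add.assoc)
qed

lemma orthosum3:
  assumes P: "a \<in> P" "b \<in> P" "c \<in> P"
    and z: "a*b = 0" "a*c = 0" "b*c = 0"
    and s: "a + b + c = x"
  shows "sa_orthosum Pos [a,b,c] x"
proof -
  note O = comm_zero[OF P(1) P(2) z(1)] comm_zero[OF P(1) P(3) z(2)] comm_zero[OF P(2) P(3) z(3)]
  show ?thesis unfolding sa_orthosum_def
    using O s by (simp add: less_Suc_eq numeral_eq_Suc add.assoc)
qed

lemma orthosum2:
  assumes P: "a \<in> P" "b \<in> P" and z: "a*b = 0" and s: "a + b = x"
  shows "sa_orthosum Pos [a,b] x"
proof -
  note O = comm_zero[OF P(1) P(2) z(1)]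
  show ?thesis unfolding sa_orthosum_def
    using O s by (simp add: less_Suc_eq numeral_eq_Suc add.assoc)
qed


lemma r_eq:
  assumes x: "x \<in> P" and c: "c \<in> P" and u: "u \<in> P" and v: "v \<in> P" and cx: "c * x = x * c"
    and cu: "le c u" and cv: "le c v" and gl: "\<forall>s\<in>P. le s x \<longrightarrow> le s u \<longrightarrow> le s v \<longrightarrow> le s c"
  shows "sa_meet A Pos (sa_meet A Pos x u) v = c * x" "c * x \<in> P"
proof -
  have cc: "c * c = c" and xx: "x * x = x" using c x Pidem by blast+
  have "x * c * x = c * x" using cx xx by (metis mult.assoc)
  then have "c * x \<in> Pos" using SA3 P_Pos x c by metis
  moreover have "c * x * (c * x) = c * x" using cx cc xx
    by (metis mult.assoc)
  ultimately show cxP: "c * x \<in> P" using P_iff PosA by blast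
  have cu': "c * u = c" and cv': "c * v = c" using leD cu cv c u v by blast+
  have "le (c * x) x" using le_iff[OF cxP x] xx by (simp add: mult.assoc)
  moreover have "le (c * x) u" using le_iff[OF cxP u] cx cu' by (metis mult.assoc)
  ultimately have l1: "le (c * x) (sa_meet A Pos x u)" using meet_props(4)[OF x u cxP] by blast
  have l2: "le (c * x) v" using le_iff[OF cxP v] cx cv' by (metis mult.assoc)
  note M = meet_props[OF x u]
  show "sa_meet A Pos (sa_meet A Pos x u) v = c * x"
  proof (rule meet_eq[OF cxP l1 l2], intro ballI impI)
    fix s assume s: "s \<in> P" and "le s (sa_meet A Pos x u) \<and> le s v"
    then have "le s x" "le s u" "le s v" using M le_trans by blast+
    then have "le s c" using gl s by blast
    then have "s * c = s" "s * x = s" using le_iff s c x \<open>le s x\<close> by blast+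
    then have "s * (c * x) = s" by (metis mult.assoc)
    then show "le s (c * x)" using le_iff s cxP by blast
  qed
qed

lemma mz: assumes "c \<in> P" "j \<in> P" "le c j" shows "(1 - j) * (c * x) = 0" "(1 - j) * c = 0"
proof -
  have "j * c = c" using leD assms by blast
  then show "(1 - j) * c = 0" by (simp add: algebra_simps)
  then show "(1 - j) * (c * x) = 0" by (metis mult.assoc mult_zero_left)
qed

end

theorem theorem3p6:
  fixes A Pos :: "'r::real_algebra_1 set" and p q :: 'r
  assumes SA: "synaptic_algebra A Pos"
    and hp: "p \<in> sa_proj A" and hq: "q \<in> sa_proj A"
  defines "meet \<equiv> sa_meet A Pos" and "join \<equiv> sa_join A Pos"
  defines "rp \<equiv> meet (meet p (join (sa_perp p) q)) (join (sa_perp p) (sa_perp q))"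
    and "rpp \<equiv> meet (meet (sa_perp p) (join p q)) (join p (sa_perp q))"
    and "rq \<equiv> meet (meet q (join p (sa_perp q))) (join (sa_perp p) (sa_perp q))"
    and "rqp \<equiv> meet (meet (sa_perp q) (join p q)) (join (sa_perp p) q)"
    and "com \<equiv> meet (meet (meet (join p q) (join p (sa_perp q))) (join (sa_perp p) q))
                 (join (sa_perp p) (sa_perp q))"
  shows "(sa_orth Pos rp rpp \<and> sa_orth Pos rq rqp)
    \<and> (sa_orthosum Pos [meet p q, meet p (sa_perp q), meet (sa_perp p) q,
          meet (sa_perp p) (sa_perp q), rp, rpp] 1
       \<and> sa_orthosum Pos [sa_perp com, rp, rpp] 1)
    \<and> (sa_orthosum Pos [meet p q, meet p (sa_perp q), meet (sa_perp p) q,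
          meet (sa_perp p) (sa_perp q), rq, rqp] 1
       \<and> sa_orthosum Pos [sa_perp com, rq, rqp] 1)
    \<and> (sa_orthosum Pos [rp, rpp] com \<and> sa_orthosum Pos [rq, rqp] com)"
proof -
  interpret synalg A Pos by (rule synalg.intro[OF SA])
  have np: "1 - p \<in> P" and nq: "1 - q \<in> P" using P_perp hp hq by blast+
  define j1 where "j1 = sa_join A Pos p q"
  define j2 where "j2 = sa_join A Pos p (1 - q)"
  define j3 where "j3 = sa_join A Pos (1 - p) q"
  define j4 where "j4 = sa_join A Pos (1 - p) (1 - q)"
  note J1 = join_props[OF hp hq, folded j1_def]
  note J2 = join_props[OF hp nq, folded j2_def]
  note J3 = join_props[OF np hq, folded j3_def]
  note J4 = join_props[OF np nq, folded j4_def]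
  define c where "c = sa_meet A Pos (sa_meet A Pos (sa_meet A Pos j1 j2) j3) j4"
  note M2 = meet_props[OF J1(1) J2(1)]
  note M3 = meet_props[OF M2(1) J3(1)]
  note C = meet_props[OF M3(1) J4(1), folded c_def]
  have cP: "c \<in> P" by (rule C(1))
  have cj4: "le c j4" by (rule C(3))
  have cj3: "le c j3" using C(2) M3(3) le_trans by blast
  have cj2: "le c j2" using C(2) M3(2) M2(3) le_trans by blast
  have cj1: "le c j1" using C(2) M3(2) M2(2) le_trans by blast
  have lec: "\<forall>s\<in>P. le s j1 \<longrightarrow> le s j2 \<longrightarrow> le s j3 \<longrightarrow> le s j4 \<longrightarrow> le s c"
    using C(4) M3(4) M2(4) by blast
  have pc: "c * p = p * c"
  proof -
    have "p * j1 = j1 * p" "p * j2 = j2 * p" using comm_le hp J1 J2 by blast+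
    moreover have "p * j3 = j3 * p" "p * j4 = j4 * p" using comm_le_perp hp J3 J4 by blast+
    ultimately show ?thesis unfolding c_def using comm_meet hp J1(1) J2(1) J3(1) J4(1) M2(1) M3(1)
      by metis
  qed
  have qc: "c * q = q * c"
  proof -
    have "q * j1 = j1 * q" "q * j3 = j3 * q" using comm_le hq J1 J3 by blast+
    moreover have "q * j2 = j2 * q" "q * j4 = j4 * q" using comm_le_perp hq J2 J4 by blast+
    ultimately show ?thesis unfolding c_def using comm_meet hq J1(1) J2(1) J3(1) J4(1) M2(1) M3(1)
      by metis
  qed
  have pc': "c * (1 - p) = (1 - p) * c" and qc': "c * (1 - q) = (1 - q) * c"
    using pc qc by (simp_all add: algebra_simps)
  have rp_eq: "rp = c * p" and rpP: "c * p \<in> P"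
  proof -
    have g: "\<forall>s\<in>P. le s p \<longrightarrow> le s j3 \<longrightarrow> le s j4 \<longrightarrow> le s c"
      using lec J1(2) J2(2) le_trans by blast
    show "rp = c * p" "c * p \<in> P" using r_eq[OF hp cP J3(1) J4(1) pc cj3 cj4 g]
      unfolding rp_def meet_def join_def sa_perp_def j3_def j4_def by simp_all
  qed
  have rpp_eq: "rpp = c * (1 - p)" and rppP: "c * (1 - p) \<in> P"
  proof -
    have g: "\<forall>s\<in>P. le s (1 - p) \<longrightarrow> le s j1 \<longrightarrow> le s j2 \<longrightarrow> le s c"
      using lec J3(2) J4(2) le_trans by blast
    show "rpp = c * (1 - p)" "c * (1 - p) \<in> P" using r_eq[OF np cP J1(1) J2(1) pc' cj1 cj2 g]
      unfolding rpp_def meet_def join_def sa_perp_def j1_def j2_def by simp_all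
  qed
  have rq_eq: "rq = c * q" and rqP: "c * q \<in> P"
  proof -
    have g: "\<forall>s\<in>P. le s q \<longrightarrow> le s j2 \<longrightarrow> le s j4 \<longrightarrow> le s c"
      using lec J1(3) J3(3) le_trans by blast
    show "rq = c * q" "c * q \<in> P" using r_eq[OF hq cP J2(1) J4(1) qc cj2 cj4 g]
      unfolding rq_def meet_def join_def sa_perp_def j2_def j4_def by simp_all
  qed
  have rqp_eq: "rqp = c * (1 - q)" and rqpP: "c * (1 - q) \<in> P"
  proof -
    have g: "\<forall>s\<in>P. le s (1 - q) \<longrightarrow> le s j1 \<longrightarrow> le s j3 \<longrightarrow> le s c"
      using lec J2(3) J4(3) le_trans by blast
    show "rqp = c * (1 - q)" "c * (1 - q) \<in> P" using r_eq[OF nq cP J1(1) J3(1) qc' cj1 cj3 g]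
      unfolding rqp_def meet_def join_def sa_perp_def j1_def j3_def by simp_all
  qed
  have com_eq: "com = c" unfolding com_def c_def meet_def join_def sa_perp_def j1_def j2_def j3_def j4_def ..
  define m1 where "m1 = sa_meet A Pos p q"
  define m2 where "m2 = sa_meet A Pos p (1 - q)"
  define m3 where "m3 = sa_meet A Pos (1 - p) q"
  define m4 where "m4 = sa_meet A Pos (1 - p) (1 - q)"
  have m1e: "m1 = 1 - j4" unfolding m1_def j4_def using meet_join hp hq by simp
  have m2e: "m2 = 1 - j3" unfolding m2_def j3_def using meet_join hp nq by simp
  have m3e: "m3 = 1 - j2" unfolding m3_def j2_def using meet_join np hq by simp
  have m4e: "m4 = 1 - j1" unfolding m4_def j1_def using meet_join np nq by simp
  note N1 = meet_props[OF hp hq, folded m1_def]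
  note N2 = meet_props[OF hp nq, folded m2_def]
  note N3 = meet_props[OF np hq, folded m3_def]
  note N4 = meet_props[OF np nq, folded m4_def]
  have lpp: "\<And>s. le s p \<Longrightarrow> le s (1 - (1 - p))" "\<And>s. le s q \<Longrightarrow> le s (1 - (1 - q))" by simp_all
  have z12: "m1 * m2 = 0" using orth_via[OF N1(1) hq N2(1) N1(3) N2(3)] .
  have z13: "m1 * m3 = 0" using orth_via[OF N1(1) hp N3(1) N1(2) N3(2)] .
  have z14: "m1 * m4 = 0" using orth_via[OF N1(1) hp N4(1) N1(2) N4(2)] .
  have z23: "m2 * m3 = 0" using orth_via[OF N2(1) hp N3(1) N2(2) N3(2)] .
  have z24: "m2 * m4 = 0" using orth_via[OF N2(1) hp N4(1) N2(2) N4(2)] .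
  have z34: "m3 * m4 = 0" using orth_via[OF N3(1) hq N4(1) N3(3) N4(3)] .
  have z43: "m4 * m3 = 0" using orth_comm N3(1) N4(1) z34 by blast
  have z42: "m4 * m2 = 0" using orth_comm N2(1) N4(1) z24 by blast
  have z32: "m3 * m2 = 0" using orth_comm N2(1) N3(1) z23 by blast
  have z41: "m4 * m1 = 0" using orth_comm N1(1) N4(1) z14 by blast
  have z31: "m3 * m1 = 0" using orth_comm N1(1) N3(1) z13 by blast
  have z21: "m2 * m1 = 0" using orth_comm N1(1) N2(1) z12 by blast
  have jn1: "sa_join A Pos m4 m3 = m4 + m3" using orth_join N4(1) N3(1) z43 by blast
  have P43: "m4 + m3 \<in> P" using join_props(1)[OF N4(1) N3(1)] jn1 by simp
  have jn2: "sa_join A Pos (m4 + m3) m2 = m4 + m3 + m2"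
    using orth_join[OF P43 N2(1)] z42 z32 by (simp add: algebra_simps)
  have P432: "m4 + m3 + m2 \<in> P" using join_props(1)[OF P43 N2(1)] jn2 by simp
  have jn3: "sa_join A Pos (m4 + m3 + m2) m1 = m4 + m3 + m2 + m1"
    using orth_join[OF P432 N1(1)] z41 z31 z21 by (simp add: algebra_simps)
  have "c = 1 - (m4 + m3 + m2 + m1)"
  proof -
    have e4: "1 - j1 = m4" "1 - j2 = m3" "1 - j3 = m2" "1 - j4 = m1" using m1e m2e m3e m4e by simp_all
    have "sa_meet A Pos j1 j2 = 1 - (m4 + m3)"
      by (simp only: meet_join[OF J1(1) J2(1)] e4 jn1)
    then have e5: "1 - sa_meet A Pos j1 j2 = m4 + m3" by simp
    have "sa_meet A Pos (sa_meet A Pos j1 j2) j3 = 1 - (m4 + m3 + m2)"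
      by (simp only: meet_join[OF M2(1) J3(1)] e4 e5 jn2)
    then have e6: "1 - sa_meet A Pos (sa_meet A Pos j1 j2) j3 = m4 + m3 + m2" by simp
    show ?thesis unfolding c_def by (simp only: meet_join[OF M3(1) J4(1)] e4 e6 jn3)
  qed
  then have sum: "m1 + m2 + m3 + m4 + c = 1" by (simp add: algebra_simps)
  have a1: "m1 * (c * x) = 0" for x using mz(1)[OF cP J4(1) cj4] m1e by simp
  have a2: "m2 * (c * x) = 0" for x using mz(1)[OF cP J3(1) cj3] m2e by simp
  have a3: "m3 * (c * x) = 0" for x using mz(1)[OF cP J2(1) cj2] m3e by simp
  have a4: "m4 * (c * x) = 0" for x using mz(1)[OF cP J1(1) cj1] m4e by simp
  have cc: "c * c = c" using Pidem cP by blast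
  have pp: "p * p = p" "q * q = q" using Pidem hp hq by blast+
  have ncx: "(1 - c) * (c * x) = 0" for x using cc by (simp add: left_diff_distrib flip: mult.assoc)
  have cpp: "(c * p) * (c * (1 - p)) = 0"
  proof -
    have "(c * p) * (c * (1 - p)) = c * (p * c) * (1 - p)" by (simp add: mult.assoc)
    also have "... = c * c * (p * (1 - p))" using pc by (metis mult.assoc)
    also have "p * (1 - p) = 0" using pp by (simp add: algebra_simps)
    finally show ?thesis by simp
  qed
  have cqq: "(c * q) * (c * (1 - q)) = 0"
  proof -
    have "(c * q) * (c * (1 - q)) = c * (q * c) * (1 - q)" by (simp add: mult.assoc)
    also have "... = c * c * (q * (1 - q))" using qc by (metis mult.assoc)
    also have "q * (1 - q) = 0" using pp by (simp add: algebra_simps)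
    finally show ?thesis by simp
  qed
  have ncP: "1 - c \<in> P" using P_perp cP by blast
  have sp: "c * p + c * (1 - p) = c" "c * q + c * (1 - q) = c" by (simp_all add: algebra_simps)
  have mdefs: "meet p q = m1" "meet p (sa_perp q) = m2" "meet (sa_perp p) q = m3"
    "meet (sa_perp p) (sa_perp q) = m4"
    unfolding meet_def sa_perp_def m1_def m2_def m3_def m4_def by simp_all
  have o1: "sa_orth Pos (c * p) (c * (1 - p))" using orthI rpP rppP cpp by simp
  have o2: "sa_orth Pos (c * q) (c * (1 - q))" using orthI rqP rqpP cqq by simp
  have s1: "sa_orthosum Pos [m1, m2, m3, m4, c * p, c * (1 - p)] 1"
    by (rule orthosum6[OF N1(1) N2(1) N3(1) N4(1) rpP rppP z12 z13 z14 a1 a1 z23 z24 a2 a2 z34 a3 a3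
        a4 a4 cpp]) (use sum sp in \<open>simp add: algebra_simps\<close>)
  have s2: "sa_orthosum Pos [m1, m2, m3, m4, c * q, c * (1 - q)] 1"
    by (rule orthosum6[OF N1(1) N2(1) N3(1) N4(1) rqP rqpP z12 z13 z14 a1 a1 z23 z24 a2 a2 z34 a3 a3
        a4 a4 cqq]) (use sum sp in \<open>simp add: algebra_simps\<close>)
  have s3: "sa_orthosum Pos [1 - c, c * p, c * (1 - p)] 1"
    by (rule orthosum3[OF ncP rpP rppP ncx ncx cpp]) (use sp in \<open>simp add: algebra_simps\<close>)
  have s4: "sa_orthosum Pos [1 - c, c * q, c * (1 - q)] 1"
    by (rule orthosum3[OF ncP rqP rqpP ncx ncx cqq]) (use sp in \<open>simp add: algebra_simps\<close>)
  have s5: "sa_orthosum Pos [c * p, c * (1 - p)] c" by (rule orthosum2[OF rpP rppP cpp sp(1)])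
  have s6: "sa_orthosum Pos [c * q, c * (1 - q)] c" by (rule orthosum2[OF rqP rqpP cqq sp(2)])
  show ?thesis
    unfolding mdefs rp_eq rpp_eq rq_eq rqp_eq com_eq
    using o1 o2 s1 s2 s3 s4 s5 s6 by (simp add: sa_perp_def)
qed

end
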